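(* Let $(X,d)$ be a bounded metric space and $\lambda\ge0$. Let $\ell,\ell_n:X\to[0,+\infty)$ ($n\in\mathbb{N}$) be lower semicontinuous with $\inf_X\ell=\inf_X\ell_n=0$, and assume $\ell$ is bounded. Let $u$ and $u_n$ be the Perron solutions of $(\mathcal{G}_\lambda)$ associated with $\ell$ and $\ell_n$, respectively. If $\ell_n\to\ell$ uniformly, then $u_n\to u$ uniformly.
   Context: Global slope: $G[u](x)=\sup_{y\neq x}\frac{(u(x)-u(y))_+}{d(x,y)}$ if $u(x)<+\infty$, $G[u](x)=+\infty$ otherwise. A solution of $(\mathcal{G}_\lambda)$ with data $\ell$ is a lower semicontinuous $u$ with $\inf_Xu=0$ and $\lambda u+G[u]=\ell$ on $X$; the Perron solution is the solution that is pointwise maximal among all solutions. *)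

theory Defs
  imports "HOL-Analysis.Analysis"
begin

definition lsc :: "('a::topological_space \<Rightarrow> 'b::linorder) \<Rightarrow> bool" where
  "lsc f \<longleftrightarrow> (\<forall>x. \<forall>t. t < f x \<longrightarrow> (\<forall>\<^sub>F y in nhds x. t < f y))"

text \<open>Global slope G[u](x) for u : X \<rightarrow> [0,+\<infinity>]; the supremum over the
  empty set (X a singleton) is 0, which is the value obtained by adjoining 0.\<close>
definition global_slope :: "('a::metric_space \<Rightarrow> ereal) \<Rightarrow> 'a \<Rightarrow> ereal" where
  "global_slope u x =
     (if u x < \<infinity>
      then Sup (insert 0 {max (u x - u y) 0 / ereal (dist x y) | y. y \<noteq> x})
      else \<infinity>)"

definition is_solution :: "real \<Rightarrow> ('a::metric_space \<Rightarrow> real) \<Rightarrow> ('a \<Rightarrow> ereal) \<Rightarrow> bool" where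
  "is_solution lam l u \<longleftrightarrow>
     (\<forall>x. 0 \<le> u x) \<and> lsc u \<and> (INF x. u x) = 0 \<and>
     (\<forall>x. ereal lam * u x + global_slope u x = ereal (l x))"

definition is_perron_solution :: "real \<Rightarrow> ('a::metric_space \<Rightarrow> real) \<Rightarrow> ('a \<Rightarrow> ereal) \<Rightarrow> bool" where
  "is_perron_solution lam l u \<longleftrightarrow>
     is_solution lam l u \<and> (\<forall>v. is_solution lam l v \<longrightarrow> (\<forall>x. v x \<le> u x))"

definition uniformly_conv_ereal :: "(nat \<Rightarrow> 'a \<Rightarrow> ereal) \<Rightarrow> ('a \<Rightarrow> ereal) \<Rightarrow> bool" where
  "uniformly_conv_ereal f g \<longleftrightarrow>
     (\<forall>e>0. \<forall>\<^sub>F n in sequentially. \<forall>x. \<bar>f n x - g x\<bar> < ereal e)"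

end

theory Submission
  imports Defs
begin

definition subsol :: "real \<Rightarrow> ('a::metric_space \<Rightarrow> real) \<Rightarrow> ('a \<Rightarrow> real) \<Rightarrow> bool" where
  "subsol lam l v \<longleftrightarrow> (\<forall>x. 0 \<le> v x) \<and> lsc v \<and> (\<forall>e>0. \<exists>x. v x < e) \<and>
     (\<forall>x y. v x - v y \<le> (l x - lam * v x) * dist x y)"

lemma lsc_metric:
  fixes f :: "'a::metric_space \<Rightarrow> 'b::linorder"
  shows "lsc f \<longleftrightarrow> (\<forall>x t. t < f x \<longrightarrow> (\<exists>r>0. \<forall>y. dist y x < r \<longrightarrow> t < f y))"
  unfolding lsc_def eventually_nhds_metric by blast

lemma lsc_ereal_iff: "lsc (\<lambda>x. ereal (w x)) \<longleftrightarrow> lsc (w :: 'a::metric_space \<Rightarrow> real)"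
proof
  assume h: "lsc (\<lambda>x. ereal (w x))"
  show "lsc w" unfolding lsc_def
  proof (intro allI impI)
    fix x t assume "t < w x"
    then have "ereal t < ereal (w x)" by simp
    with h have "\<forall>\<^sub>F y in nhds x. ereal t < ereal (w y)" unfolding lsc_def by blast
    then show "\<forall>\<^sub>F y in nhds x. t < w y" by simp
  qed
next
  assume h: "lsc w"
  show "lsc (\<lambda>x. ereal (w x))" unfolding lsc_def
  proof (intro allI impI)
    fix x and t :: ereal assume t: "t < ereal (w x)"
    show "\<forall>\<^sub>F y in nhds x. t < ereal (w y)"
    proof (cases t)
      case (real r)
      with t have "r < w x" by simp
      with h have "\<forall>\<^sub>F y in nhds x. r < w y" unfolding lsc_def by blast
      then show ?thesis using real by simp
    next
      case PInf with t show ?thesis by simp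
    next
      case MInf then show ?thesis by simp
    qed
  qed
qed

lemma INF_ereal_zero_iff:
  fixes w :: "'a \<Rightarrow> real"
  assumes "\<forall>x. 0 \<le> w x"
  shows "(INF x. ereal (w x)) = 0 \<longleftrightarrow> (\<forall>e>0. \<exists>x. w x < e)"
proof
  assume h: "(INF x. ereal (w x)) = 0"
  show "\<forall>e>0. \<exists>x. w x < e"
  proof (intro allI impI)
    fix e :: real assume "0 < e"
    then have "(INF x. ereal (w x)) < ereal e" using h by simp
    then show "\<exists>x. w x < e" by (simp add: INF_less_iff)
  qed
next
  assume h: "\<forall>e>0. \<exists>x. w x < e"
  have "(INF x. ereal (w x)) \<le> 0"
  proof (rule ereal_le_epsilon2)
    fix e :: real assume "0 < e"
    then obtain x where "w x < e" using h by blast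
    then have "(INF x. ereal (w x)) \<le> ereal (w x)" by (intro INF_lower) auto
    also have "\<dots> \<le> 0 + ereal e" using \<open>w x < e\<close> by simp
    finally show "(INF x. ereal (w x)) \<le> 0 + ereal e" .
  qed
  moreover have "0 \<le> (INF x. ereal (w x))" using assms by (intro INF_greatest) auto
  ultimately show "(INF x. ereal (w x)) = 0" by simp
qed

lemma real_inf_zero:
  fixes l :: "'a \<Rightarrow> real"
  assumes "(INF x. l x) = 0" "e > 0"
  shows "\<exists>x. l x < e"
proof (rule ccontr)
  assume "\<not> ?thesis"
  then have "\<forall>x. e \<le> l x" by (auto simp: not_less)
  then have "e \<le> (INF x. l x)" by (intro cINF_greatest) auto
  with assms show False by simp
qed

lemma ereal_slope_eq:
  assumes "d \<noteq> 0"
  shows "max (ereal a - ereal b) 0 / ereal d = ereal (max (a - b) 0 / d)"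
proof -
  have 1: "ereal a - ereal b = ereal (a - b)" by simp
  have 2: "max (ereal (a - b)) 0 = ereal (max (a - b) 0)"
    by (cases "a - b \<le> 0") (auto simp: max_def)
  have 3: "ereal m / ereal d = ereal (m / d)" for m
    using assms by (simp add: ereal_divide)
  show ?thesis by (simp only: 1 2 3)
qed

lemma gs_ge:
  fixes w :: "'a::metric_space \<Rightarrow> real"
  assumes "y \<noteq> x"
  shows "ereal (max (w x - w y) 0 / dist x y) \<le> global_slope (\<lambda>z. ereal (w z)) x"
proof -
  have "max (ereal (w x) - ereal (w y)) 0 / ereal (dist x y) = ereal (max (w x - w y) 0 / dist x y)"
    using assms by (intro ereal_slope_eq) simp
  moreover have "max (ereal (w x) - ereal (w y)) 0 / ereal (dist x y) \<in>
     insert 0 {max (ereal (w x) - ereal (w z)) 0 / ereal (dist x z) |z. z \<noteq> x}"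
    apply (intro insertI2 CollectI)
    apply (rule exI[where x=y])
    using assms by (intro conjI) (rule refl)
  ultimately have "ereal (max (w x - w y) 0 / dist x y) \<le>
     Sup (insert 0 {max (ereal (w x) - ereal (w z)) 0 / ereal (dist x z) |z. z \<noteq> x})"
    by (simp only: Sup_upper)
  then show ?thesis unfolding global_slope_def by simp
qed

lemma gs_le:
  fixes w :: "'a::metric_space \<Rightarrow> real"
  assumes "0 \<le> g" "\<forall>y. w x - w y \<le> g * dist x y"
  shows "global_slope (\<lambda>z. ereal (w z)) x \<le> ereal g"
proof -
  have "Sup (insert 0 {max (ereal (w x) - ereal (w y)) 0 / ereal (dist x y) |y. y \<noteq> x}) \<le> ereal g"
  proof (rule Sup_least, safe)
  show "0 \<le> ereal g" using assms by simp
next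
  fix y assume "y \<noteq> x"
  then have d: "dist x y > 0" by simp
  have "max (w x - w y) 0 / dist x y \<le> g"
    using assms d by (auto simp: divide_le_eq max_def)
  then show "max (ereal (w x) - ereal (w y)) 0 / ereal (dist x y) \<le> ereal g"
    using d by (subst ereal_slope_eq) auto
  qed
  then show ?thesis unfolding global_slope_def by simp
qed

lemma gs_nonneg: "0 \<le> global_slope u x"
  unfolding global_slope_def by (auto intro: Sup_upper)

lemma gs_bound:
  fixes w :: "'a::metric_space \<Rightarrow> real"
  assumes "global_slope (\<lambda>z. ereal (w z)) x \<le> ereal g"
  shows "w x - w y \<le> g * dist x y"
proof (cases "y = x")
  case True then show ?thesis using gs_nonneg[of "\<lambda>z. ereal (w z)" x] assms by auto
next
  case False
  then have d: "dist x y > 0" by simp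
  from order_trans[OF gs_ge[OF False, of w] assms] have "max (w x - w y) 0 / dist x y \<le> g" by simp
  then show ?thesis using d by (auto simp: divide_le_eq max_def split: if_splits)
qed


lemma subsol_le:
  fixes v :: "'a::metric_space \<Rightarrow> real"
  assumes "subsol lam l v" "0 \<le> lam" "\<forall>x. 0 \<le> l x" "\<forall>x y::'a. dist x y \<le> D"
  shows "v x \<le> l x * D"
proof (rule field_le_epsilon)
  fix e :: real assume "0 < e"
  then obtain y where y: "v y < e" using assms(1) unfolding subsol_def by blast
  have 1: "v x - v y \<le> (l x - lam * v x) * dist x y" using assms(1) unfolding subsol_def by blast
  have "0 \<le> lam * v x * dist x y" using assms(1,2) unfolding subsol_def by simp
  moreover have "l x * dist x y \<le> l x * D" using assms(3,4) by (intro mult_left_mono) auto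
  ultimately have "v x \<le> v y + l x * D" using 1 by (simp add: algebra_simps)
  then show "v x \<le> l x * D + e" using y by simp
qed

lemma subsol_zero:
  assumes "\<forall>x. 0 \<le> l x"
  shows "subsol lam l (\<lambda>x. 0)"
  unfolding subsol_def lsc_def using assms by (auto simp: mult_nonneg_nonneg)

definition Wsup :: "real \<Rightarrow> ('a::metric_space \<Rightarrow> real) \<Rightarrow> 'a \<Rightarrow> real" where
  "Wsup lam l x = (SUP v\<in>{v. subsol lam l v}. v x)"

locale setting =
  fixes lam :: real and l :: "'a::metric_space \<Rightarrow> real" and D :: real
  assumes lam: "0 \<le> lam" and lpos: "\<forall>x. 0 \<le> l x" and Dpos: "0 < D"
    and Dbd: "\<forall>x y::'a. dist x y \<le> D" and llsc: "lsc l" and linf: "\<forall>e>0. \<exists>x. l x < e"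
begin

lemma bdd: "bdd_above ((\<lambda>v. v x) ` {v. subsol lam l v})"
  using subsol_le[OF _ lam lpos Dbd] by (auto intro!: bdd_aboveI[where M="l x * D"])

lemma ne: "{v. subsol lam l v} \<noteq> {}"
  using subsol_zero[OF lpos] by blast

lemma W_upper: "subsol lam l v \<Longrightarrow> v x \<le> Wsup lam l x"
  unfolding Wsup_def by (rule cSUP_upper[OF _ bdd]) simp

lemma W_least: "(\<And>v. subsol lam l v \<Longrightarrow> v x \<le> c) \<Longrightarrow> Wsup lam l x \<le> c"
  unfolding Wsup_def by (rule cSUP_least[OF ne]) simp

lemma W_less: "t < Wsup lam l x \<Longrightarrow> \<exists>v. subsol lam l v \<and> t < v x"
  unfolding Wsup_def using less_cSUP_iff[OF ne bdd] by auto

lemma W_subsol: "subsol lam l (Wsup lam l)"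
  unfolding subsol_def
proof (intro conjI allI impI)
  fix x show "0 \<le> Wsup lam l x" using W_upper[OF subsol_zero[OF lpos]] by simp
next
  show "lsc (Wsup lam l)" unfolding lsc_metric
  proof (intro allI impI)
    fix x t assume "t < Wsup lam l x"
    then obtain v where v: "subsol lam l v" "t < v x" using W_less by blast
    then obtain r where "r > 0" "\<forall>y. dist y x < r \<longrightarrow> t < v y"
      unfolding subsol_def lsc_metric by blast
    then show "\<exists>r>0. \<forall>y. dist y x < r \<longrightarrow> t < Wsup lam l y"
      using W_upper[OF v(1)] by (meson less_le_trans)
  qed
next
  fix e :: real assume "0 < e"
  then have "e / D > 0" using Dpos by simp
  then obtain x where "l x < e / D" using linf by blast
  then have "l x * D < e" using Dpos by (simp add: pos_less_divide_eq)
  moreover have "Wsup lam l x \<le> l x * D" by (rule W_least, rule subsol_le[OF _ lam lpos Dbd])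
  ultimately show "\<exists>x. Wsup lam l x < e" by (meson le_less_trans)
next
  fix x y
  have "Wsup lam l x * (1 + lam * dist x y) \<le> Wsup lam l y + l x * dist x y"
  proof -
    have "Wsup lam l x \<le> (Wsup lam l y + l x * dist x y) / (1 + lam * dist x y)"
    proof (rule W_least)
      fix v assume v: "subsol lam l v"
      have "v x - v y \<le> (l x - lam * v x) * dist x y" using v unfolding subsol_def by blast
      then have "v x * (1 + lam * dist x y) \<le> v y + l x * dist x y" by (simp add: algebra_simps)
      also have "\<dots> \<le> Wsup lam l y + l x * dist x y" using W_upper[OF v] by simp
      finally show "v x \<le> (Wsup lam l y + l x * dist x y) / (1 + lam * dist x y)"
        using lam by (simp add: pos_le_divide_eq add_pos_nonneg)
    qed
    then show ?thesis using lam by (simp add: pos_le_divide_eq add_pos_nonneg)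
  qed
  then show "Wsup lam l x - Wsup lam l y \<le> (l x - lam * Wsup lam l x) * dist x y"
    by (simp add: algebra_simps)
qed


lemma bump:
  assumes g: "0 \<le> g" "\<forall>y. Wsup lam l x0 - Wsup lam l y \<le> g * dist x0 y"
    and glt: "g < l x0 - lam * Wsup lam l x0"
  shows False
proof -
  define W where "W = Wsup lam l"
  define a where "a = W x0"
  define L where "L = l x0"
  define \<eta> where "\<eta> = L - lam * a - g"
  define k where "k = g + \<eta> / 2"
  have Wsub: "subsol lam l W" unfolding W_def by (rule W_subsol)
  have Wnn: "\<forall>y. 0 \<le> W y" using Wsub unfolding subsol_def by blast
  have a0: "0 \<le> a" using Wnn a_def by simp
  have eta: "0 < \<eta>" using glt unfolding \<eta>_def L_def a_def W_def by simp
  have etaL: "\<eta> \<le> L" unfolding \<eta>_def using g(1) mult_nonneg_nonneg[OF lam a0] by linarith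
  have k0: "0 < k" unfolding k_def using g eta by simp
  have gW: "a - W y \<le> g * dist x0 y" for y using g unfolding a_def W_def by blast
  have "L - \<eta> / 4 < l x0" using eta L_def by simp
  then obtain \<rho> where rho: "\<rho> > 0" "\<forall>y. dist y x0 < \<rho> \<longrightarrow> L - \<eta> / 4 < l y"
    using llsc unfolding lsc_metric by blast
  define \<delta> where "\<delta> = min (\<rho> * \<eta> / 2) (\<eta> / (4 * lam + 4))"
  have d0: "0 < \<delta>" unfolding \<delta>_def using rho eta lam by simp
  have d1: "\<delta> \<le> \<rho> * \<eta> / 2" unfolding \<delta>_def by (rule min.cobounded1)
  have d2: "lam * \<delta> \<le> \<eta> / 4"
  proof -
    have "\<delta> * (4 * lam + 4) \<le> \<eta>" unfolding \<delta>_def using lam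
      by (metis min.cobounded2 pos_le_divide_eq add_nonneg_pos mult_nonneg_nonneg zero_le_numeral zero_less_numeral)
    then show ?thesis using d0 by (simp add: algebra_simps)
  qed
  define \<phi> where "\<phi> y = a + \<delta> - k * dist x0 y" for y
  define v where "v y = max (W y) (\<phi> y)" for y
  have far: "\<phi> y \<le> W y" if "2 * \<delta> / \<eta> \<le> dist x0 y" for y
  proof -
    have "2 * \<delta> \<le> \<eta> * dist x0 y" using that eta by (simp add: divide_le_eq mult.commute)
    then have "\<phi> y \<le> a - g * dist x0 y" unfolding \<phi>_def k_def by (simp add: algebra_simps)
    then show ?thesis using gW[of y] by simp
  qed
  have near: "L - \<eta> / 4 < l y" if "W y < \<phi> y" for y
  proof -
    have "dist x0 y < 2 * \<delta> / \<eta>" using far[of y] that by fastforce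
    also have "\<dots> \<le> \<rho>" using d1 eta by (simp add: divide_le_eq mult.commute)
    finally show ?thesis using rho(2) by (simp add: dist_commute)
  qed
  have philip: "\<phi> x - k * dist x y \<le> \<phi> y" for x y
  proof -
    have "dist x0 y \<le> dist x0 x + dist x y" by (rule dist_triangle)
    then have "k * dist x0 y \<le> k * dist x0 x + k * dist x y" using k0
      by (metis distrib_left mult_le_cancel_left_pos)
    then show ?thesis unfolding \<phi>_def by simp
  qed
  have vsub: "subsol lam l v"
    unfolding subsol_def
  proof (intro conjI allI impI)
    fix x show "0 \<le> v x" unfolding v_def using Wnn by (simp add: le_max_iff_disj)
  next
    show "lsc v" unfolding lsc_metric
    proof (intro allI impI)
      fix x t assume t: "t < v x"
      show "\<exists>r>0. \<forall>y. dist y x < r \<longrightarrow> t < v y"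
      proof (cases "t < W x")
        case True
        then obtain r where "r > 0" "\<forall>y. dist y x < r \<longrightarrow> t < W y"
          using Wsub unfolding subsol_def lsc_metric by blast
        then show ?thesis unfolding v_def by (meson less_max_iff_disj)
      next
        case False
        then have tp: "t < \<phi> x" using t unfolding v_def by simp
        define r where "r = (\<phi> x - t) / (k + 1)"
        have r0: "r > 0" unfolding r_def using tp k0 by simp
        have "t < v y" if "dist y x < r" for y
        proof -
          have "k * dist x y \<le> k * r" using that k0 by (simp add: dist_commute)
          also have "k * r < \<phi> x - t" unfolding r_def using tp k0
            by (simp add: field_simps)
          finally have "t < \<phi> x - k * dist x y" by simp
          also have "\<dots> \<le> \<phi> y" by (rule philip)
          finally show ?thesis unfolding v_def by simp
        qed
        then show ?thesis using r0 by blast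
      qed
    qed
  next
    fix e :: real assume e: "0 < e"
    have L0: "0 < L" using eta etaL by simp
    define e' where "e' = min (e / D) (3 * L / 4)"
    have "0 < e'" unfolding e'_def using e L0 Dpos by simp
    then obtain y where y: "l y < e'" using linf by blast
    have "\<not> (L - \<eta> / 4 < l y)" using y etaL unfolding e'_def by simp
    then have "\<not> W y < \<phi> y" using near by blast
    then have vy: "v y = W y" unfolding v_def by simp
    have "W y \<le> l y * D" by (rule subsol_le[OF Wsub lam lpos Dbd])
    also have "\<dots> < e" using y Dpos unfolding e'_def by (simp add: pos_less_divide_eq)
    finally have "v y < e" using vy by simp
    then show "\<exists>x. v x < e" by blast
  next
    fix x y
    show "v x - v y \<le> (l x - lam * v x) * dist x y"
    proof (cases "\<phi> x \<le> W x")
      case True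
      then have vx: "v x = W x" unfolding v_def by simp
      have "W x - W y \<le> (l x - lam * W x) * dist x y" using Wsub unfolding subsol_def by blast
      moreover have "W y \<le> v y" unfolding v_def by simp
      ultimately show ?thesis using vx by simp
    next
      case False
      then have vx: "v x = \<phi> x" unfolding v_def by simp
      have lx: "L - \<eta> / 4 < l x" using near False by simp
      have "\<phi> x \<le> a + \<delta>" unfolding \<phi>_def using k0 by simp
      then have "lam * \<phi> x \<le> lam * a + lam * \<delta>" using lam
        by (metis distrib_left mult_left_mono)
      then have kle: "k \<le> l x - lam * \<phi> x" using lx d2 unfolding k_def \<eta>_def by argo
      have "\<phi> x - v y \<le> k * dist x y" using philip[of x y] unfolding v_def by simp
      also have "\<dots> \<le> (l x - lam * \<phi> x) * dist x y" using kle by (simp add: mult_right_mono)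
      finally show ?thesis using vx by simp
    qed
  qed
  have "v x0 \<le> W x0" unfolding W_def by (rule W_upper[OF vsub])
  moreover have "a + \<delta> \<le> v x0" unfolding v_def \<phi>_def by simp
  ultimately show False using d0 a_def by simp
qed


lemma W_solution: "is_solution lam l (\<lambda>x. ereal (Wsup lam l x))"
proof -
  define W where "W = Wsup lam l"
  have Wsub: "subsol lam l W" unfolding W_def by (rule W_subsol)
  have Wnn: "\<forall>y. 0 \<le> W y" using Wsub unfolding subsol_def by blast
  have eq: "ereal lam * ereal (W x) + global_slope (\<lambda>z. ereal (W z)) x = ereal (l x)" for x
  proof -
    define g where "g = l x - lam * W x"
    have bd: "W x - W y \<le> g * dist x y" for y using Wsub unfolding subsol_def g_def by blast
    have g0: "0 \<le> g"
    proof (rule ccontr)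
      assume "\<not> 0 \<le> g"
      then have "W x \<le> W y" for y using bd[of y] by (smt (verit) mult_nonpos_nonneg zero_le_dist)
      moreover have "\<exists>y. W y < e" if "e > 0" for e using Wsub that unfolding subsol_def by blast
      ultimately have "W x \<le> 0" by (meson field_le_epsilon less_le_trans not_le add.left_neutral order_less_imp_le)
      then have "W x = 0" using Wnn by (simp add: order_antisym)
      then have "g = l x" unfolding g_def by simp
      with \<open>\<not> 0 \<le> g\<close> lpos show False by simp
    qed
    have le: "global_slope (\<lambda>z. ereal (W z)) x \<le> ereal g" by (rule gs_le[OF g0]) (use bd in blast)
    have ge: "ereal g \<le> global_slope (\<lambda>z. ereal (W z)) x"
    proof (rule ccontr)
      assume "\<not> ereal g \<le> global_slope (\<lambda>z. ereal (W z)) x"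
      then have lt: "global_slope (\<lambda>z. ereal (W z)) x < ereal g" by simp
      have nn: "0 \<le> global_slope (\<lambda>z. ereal (W z)) x" by (rule gs_nonneg)
      obtain g1 where g1: "global_slope (\<lambda>z. ereal (W z)) x = ereal g1"
        using lt nn by (cases "global_slope (\<lambda>z. ereal (W z)) x") auto
      have "0 \<le> g1" "g1 < g" using lt nn g1 by auto
      moreover have "\<forall>y. W x - W y \<le> g1 * dist x y" using gs_bound[of W x g1] g1 by simp
      ultimately show False using bump[of g1 x] unfolding W_def g_def by blast
    qed
    have "global_slope (\<lambda>z. ereal (W z)) x = ereal g" using le ge by simp
    then show ?thesis unfolding g_def by simp
  qed
  have "is_solution lam l (\<lambda>x. ereal (W x))"
    unfolding is_solution_def
  proof (intro conjI allI)
    show "\<And>x. 0 \<le> ereal (W x)" using Wnn by simp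
    show "lsc (\<lambda>x. ereal (W x))" unfolding lsc_ereal_iff using Wsub subsol_def by blast
    show "(INF x. ereal (W x)) = 0" using INF_ereal_zero_iff[OF Wnn] Wsub subsol_def by blast
    show "\<And>x. ereal lam * ereal (W x) + global_slope (\<lambda>z. ereal (W z)) x = ereal (l x)" by (rule eq)
  qed
  then show ?thesis unfolding W_def .
qed

lemma perron_ge:
  assumes "is_perron_solution lam l u" "subsol lam l v"
  shows "ereal (v x) \<le> u x"
proof -
  have "ereal (Wsup lam l x) \<le> u x" using assms(1) W_solution unfolding is_perron_solution_def by blast
  moreover have "v x \<le> Wsup lam l x" by (rule W_upper[OF assms(2)])
  ultimately show ?thesis by (meson ereal_less_eq(3) order_trans)
qed

end


lemma sol_real:
  assumes lam: "0 \<le> lam" and sol: "is_solution lam l u"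
  shows "u = (\<lambda>x. ereal (real_of_ereal (u x)))" "subsol lam l (\<lambda>x. real_of_ereal (u x))"
proof -
  have nn: "0 \<le> u x" for x using sol unfolding is_solution_def by blast
  have fin: "u x \<noteq> \<infinity>" for x
  proof
    assume inf: "u x = \<infinity>"
    then have "global_slope u x = \<infinity>" unfolding global_slope_def by simp
    moreover have "ereal lam * u x + global_slope u x = ereal (l x)" using sol unfolding is_solution_def by blast
    ultimately show False using inf lam by (cases "lam = 0") auto
  qed
  show ueq: "u = (\<lambda>x. ereal (real_of_ereal (u x)))"
  proof
    fix x show "u x = ereal (real_of_ereal (u x))" using fin[of x] nn[of x] by (cases "u x") auto
  qed
  define w where "w x = real_of_ereal (u x)" for x
  have u_w: "u = (\<lambda>x. ereal (w x))" using ueq unfolding w_def by simp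
  have wnn: "\<forall>x. 0 \<le> w x" using nn unfolding w_def by (simp add: real_of_ereal_pos)
  have "subsol lam l w"
    unfolding subsol_def
  proof (intro conjI allI impI)
    show "\<And>x. 0 \<le> w x" using wnn by blast
    show "lsc w" using sol unfolding is_solution_def u_w lsc_ereal_iff by blast
    show "\<And>e. 0 < e \<Longrightarrow> \<exists>x. w x < e"
      using sol INF_ereal_zero_iff[OF wnn] unfolding is_solution_def u_w by blast
    fix x y
    have e: "ereal lam * ereal (w x) + global_slope (\<lambda>z. ereal (w z)) x = ereal (l x)"
      using sol unfolding is_solution_def u_w by blast
    have gn: "0 \<le> global_slope (\<lambda>z. ereal (w z)) x" by (rule gs_nonneg)
    obtain r where r: "global_slope (\<lambda>z. ereal (w z)) x = ereal r"
      using e gn by (cases "global_slope (\<lambda>z. ereal (w z)) x") auto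
    then have "r = l x - lam * w x" using e by simp
    then show "w x - w y \<le> (l x - lam * w x) * dist x y" using gs_bound[of w x r y] r by simp
  qed
  then show "subsol lam l (\<lambda>x. real_of_ereal (u x))" unfolding w_def by simp
qed


lemma perturb:
  fixes v :: "'a::metric_space \<Rightarrow> real"
  assumes sub: "subsol lam l v" and lam: "0 \<le> lam" and lpos: "\<forall>x. 0 \<le> l x"
    and Dbd: "\<forall>x y::'a. dist x y \<le> D" and Dpos: "0 < D" and t: "0 < t" "t \<le> 1"
    and l'lb: "\<forall>x. l x - t^2 \<le> l' x" and l'pos: "\<forall>x. 0 \<le> l' x"
  shows "subsol lam l' (\<lambda>x. (1 - t) * max (v x - t * D) 0)"
proof -
  define v' where "v' x = (1 - t) * max (v x - t * D) 0" for x
  have vnn: "\<forall>x. 0 \<le> v x" using sub unfolding subsol_def by blast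
  have v'nn: "0 \<le> v' x" for x unfolding v'_def using t by simp
  have v'le: "v' x \<le> v x" for x
  proof -
    have "v' x \<le> 1 * max (v x - t * D) 0" unfolding v'_def using t
      by (intro mult_right_mono) auto
    also have "\<dots> \<le> v x" using vnn t Dpos by simp
    finally show ?thesis .
  qed
  have "subsol lam l' v'"
    unfolding subsol_def
  proof (intro conjI allI impI)
    show "\<And>x. 0 \<le> v' x" by (rule v'nn)
  next
    show "lsc v'" unfolding lsc_metric
    proof (intro allI impI)
      fix x s assume s: "s < v' x"
      show "\<exists>r>0. \<forall>y. dist y x < r \<longrightarrow> s < v' y"
      proof (cases "s < 0")
        case True
        then show ?thesis using v'nn by (intro exI[of _ 1]) (auto intro: less_le_trans)
      next
        case False
        have t1: "t < 1"
        proof (rule ccontr)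
          assume "\<not> t < 1" then have "t = 1" using t by simp
          then show False using s False unfolding v'_def by simp
        qed
        have pos: "v x - t * D > 0"
        proof (rule ccontr)
          assume "\<not> v x - t * D > 0"
          then have "v' x = 0" unfolding v'_def by simp
          then show False using s False by simp
        qed
        then have "s < (1 - t) * (v x - t * D)" using s unfolding v'_def by simp
        then have "s / (1 - t) + t * D < v x" using t1 by (simp add: field_simps)
        then obtain r where r: "r > 0" "\<forall>y. dist y x < r \<longrightarrow> s / (1 - t) + t * D < v y"
          using sub unfolding subsol_def lsc_metric by blast
        have "s < v' y" if "dist y x < r" for y
        proof -
          have "s / (1 - t) + t * D < v y" using r(2) that by blast
          then have "s / (1 - t) < v y - t * D" by linarith
          then have "s < (1 - t) * (v y - t * D)" using t1 by (simp add: field_simps)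
          also have "\<dots> \<le> v' y" unfolding v'_def using t1 by (intro mult_left_mono) auto
          finally show ?thesis .
        qed
        then show ?thesis using r(1) by blast
      qed
    qed
  next
    fix e :: real assume "0 < e"
    then obtain y where "v y < e" using sub unfolding subsol_def by blast
    then show "\<exists>x. v' x < e" using v'le[of y] by (meson le_less_trans)
  next
    fix x y
    show "v' x - v' y \<le> (l' x - lam * v' x) * dist x y"
    proof (cases "v x \<le> t * D")
      case True
      then have "v' x = 0" unfolding v'_def by simp
      moreover have "0 \<le> l' x * dist x y" using l'pos by simp
      ultimately show ?thesis using v'nn[of y] by simp
    next
      case False
      then have vx: "v' x = (1 - t) * (v x - t * D)" unfolding v'_def by simp
      have vy: "(1 - t) * (v y - t * D) \<le> v' y" unfolding v'_def using t by (intro mult_left_mono) auto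
      have "v x \<le> l x * D" by (rule subsol_le[OF sub lam lpos Dbd])
      then have "t * D < l x * D" using False by simp
      then have lt: "t < l x" using Dpos by simp
      have "t * t \<le> t * l x" using lt t by simp
      then have A: "(1 - t) * l x \<le> l' x" using l'lb[rule_format, of x] by (simp add: power2_eq_square algebra_simps)
      have B: "0 \<le> (1 - t) * lam * t * D" using t lam Dpos by simp
      have C: "(1 - t) * (l x - lam * v x) \<le> l' x - lam * v' x"
        using A B unfolding vx by (simp add: algebra_simps)
      have sv: "v x - v y \<le> (l x - lam * v x) * dist x y" using sub unfolding subsol_def by blast
      have "v' x - v' y \<le> (1 - t) * (v x - v y)" using vx vy by (simp add: algebra_simps)
      also have "\<dots> \<le> (1 - t) * ((l x - lam * v x) * dist x y)" using sv t by (intro mult_left_mono) auto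
      also have "\<dots> = ((1 - t) * (l x - lam * v x)) * dist x y" by simp
      also have "\<dots> \<le> (l' x - lam * v' x) * dist x y" using C by (intro mult_right_mono) auto
      finally show ?thesis .
    qed
  qed
  then show ?thesis unfolding v'_def by simp
qed

lemma perturb_err:
  assumes "0 \<le> (v::real)" "0 < t" "t \<le> 1" "0 < D"
  shows "v - (1 - t) * max (v - t * D) 0 \<le> t * D + t * v"
proof (cases "v \<le> t * D")
  case True
  have "0 \<le> t * v" using assms by simp
  then show ?thesis using True by linarith
next
  case False
  then have "v - (1 - t) * max (v - t * D) 0 = t * v + (1 - t) * (t * D)" by (simp add: algebra_simps)
  also have "\<dots> \<le> t * v + 1 * (t * D)" using assms by (intro add_left_mono mult_right_mono) auto
  finally show ?thesis by simp
qed


theorem theorem5p4: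
  fixes lam :: real
    and l :: "'a::metric_space \<Rightarrow> real"
    and ls :: "nat \<Rightarrow> 'a \<Rightarrow> real"
    and u :: "'a \<Rightarrow> ereal"
    and us :: "nat \<Rightarrow> 'a \<Rightarrow> ereal"
  assumes X_bounded: "bounded (UNIV :: 'a set)"
    and lam_nonneg: "0 \<le> lam"
    and l_nonneg: "\<forall>x. 0 \<le> l x"
    and ls_nonneg: "\<forall>n x. 0 \<le> ls n x"
    and l_lsc: "lsc l"
    and ls_lsc: "\<forall>n. lsc (ls n)"
    and l_inf: "(INF x. l x) = 0"
    and ls_inf: "\<forall>n. (INF x. ls n x) = 0"
    and l_bounded: "bdd_above (range l)"
    and u_perron: "is_perron_solution lam l u"
    and us_perron: "\<forall>n. is_perron_solution lam (ls n) (us n)"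
    and ls_unif: "uniform_limit UNIV ls l sequentially"
  shows "uniformly_conv_ereal us u"
proof -
  obtain c :: 'a and e0 where ce: "\<forall>y. dist c y \<le> e0" using X_bounded unfolding bounded_def by blast
  define D where "D = max 1 (2 * e0)"
  have Dpos: "0 < D" unfolding D_def by simp
  have Dbd: "\<forall>x y::'a. dist x y \<le> D"
  proof (intro allI)
    fix x y :: 'a
    have "dist x y \<le> dist c x + dist c y" by (rule dist_triangle3)
    also have "\<dots> \<le> 2 * e0" using ce by (smt (verit))
    finally show "dist x y \<le> D" unfolding D_def by simp
  qed
  obtain M0 where M0: "\<forall>x. l x \<le> M0" using l_bounded by (auto simp: bdd_above_def)
  define M where "M = max M0 0"
  have M: "\<forall>x. l x \<le> M" "0 \<le> M" using M0 unfolding M_def by (auto intro: max.coboundedI1)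
  have S0: "setting lam l D"
    unfolding setting_def using lam_nonneg l_nonneg Dpos Dbd l_lsc real_inf_zero[OF l_inf] by blast
  have Sn: "setting lam (ls n) D" for n
    unfolding setting_def using lam_nonneg ls_nonneg Dpos Dbd ls_lsc real_inf_zero ls_inf by blast
  define U where "U x = real_of_ereal (u x)" for x
  define Vn where "Vn n x = real_of_ereal (us n x)" for n x
  have u_sol: "is_solution lam l u" using u_perron unfolding is_perron_solution_def by blast
  have us_sol: "is_solution lam (ls n) (us n)" for n using us_perron unfolding is_perron_solution_def by blast
  have Ueq: "u x = ereal (U x)" for x unfolding U_def by (rule fun_cong[OF sol_real(1)[OF lam_nonneg u_sol]])
  have Vneq: "us n x = ereal (Vn n x)" for n x unfolding Vn_def by (rule fun_cong[OF sol_real(1)[OF lam_nonneg us_sol[of n]]])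
  have Usub: "subsol lam l U" using sol_real(2)[OF lam_nonneg u_sol] unfolding U_def by simp
  have Unsub: "subsol lam (ls n) (Vn n)" for n
    using sol_real(2)[OF lam_nonneg us_sol[of n]] unfolding Vn_def by simp
  show ?thesis
    unfolding uniformly_conv_ereal_def
  proof (intro allI impI)
    fix e :: real assume e: "0 < e"
    define t where "t = min 1 (e / (2 * D * (M + 2)))"
    have t: "0 < t" "t \<le> 1" unfolding t_def using e Dpos M by auto
    have tDM: "t * (D * (M + 2)) \<le> e / 2"
    proof -
      have "t \<le> e / (2 * D * (M + 2))" unfolding t_def by simp
      then have "t * (2 * D * (M + 2)) \<le> e" using Dpos M by (simp add: pos_le_divide_eq)
      then show ?thesis by simp
    qed
    have "0 < t^2" using t by simp
    then have ev: "\<forall>\<^sub>F n in sequentially. \<forall>x. dist (ls n x) (l x) < t^2"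
      using ls_unif unfolding uniform_limit_iff by auto
    show "\<forall>\<^sub>F n in sequentially. \<forall>x. \<bar>us n x - u x\<bar> < ereal e"
    proof (rule eventually_mono[OF ev], intro allI)
      fix n x assume close: "\<forall>x. dist (ls n x) (l x) < t^2"
      have cl: "\<bar>ls n z - l z\<bar> < t^2" for z using close[rule_format, of z] by (simp add: dist_real_def)
      have c1: "\<forall>x. l x - t^2 \<le> ls n x"
      proof
        fix z show "l z - t^2 \<le> ls n z" using cl[of z] by linarith
      qed
      have c2: "\<forall>x. ls n x - t^2 \<le> l x"
      proof
        fix z show "ls n z - t^2 \<le> l z" using cl[of z] by linarith
      qed
      have t2: "t^2 \<le> 1" using t by (simp add: power_le_one)
      have p1: "subsol lam (ls n) (\<lambda>x. (1 - t) * max (U x - t * D) 0)"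
        by (rule perturb[OF Usub lam_nonneg l_nonneg Dbd Dpos t c1]) (use ls_nonneg in blast)
      have "ereal ((1 - t) * max (U x - t * D) 0) \<le> us n x"
        by (rule setting.perron_ge[OF Sn us_perron[rule_format] p1])
      then have i1: "(1 - t) * max (U x - t * D) 0 \<le> Vn n x" using Vneq by simp
      have Unn: "0 \<le> U x" using Usub unfolding subsol_def by blast
      have "U x \<le> l x * D" by (rule subsol_le[OF Usub lam_nonneg l_nonneg Dbd])
      also have "\<dots> \<le> M * D" using M Dpos by (intro mult_right_mono) auto
      finally have UM: "U x \<le> M * D" .
      have "U x - Vn n x \<le> t * D + t * U x" using perturb_err[OF Unn t Dpos] i1 by simp
      also have "\<dots> \<le> t * D + t * (M * D)" using UM t by (intro add_left_mono mult_left_mono) auto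
      also have "\<dots> \<le> t * (D * (M + 2))" using t Dpos by (simp add: algebra_simps)
      finally have A: "U x - Vn n x \<le> e / 2" using tDM by simp
      have p2: "subsol lam l (\<lambda>x. (1 - t) * max (Vn n x - t * D) 0)"
        by (rule perturb[OF Unsub[of n] lam_nonneg _ Dbd Dpos t c2 l_nonneg]) (use ls_nonneg in blast)
      have "ereal ((1 - t) * max (Vn n x - t * D) 0) \<le> u x"
        by (rule setting.perron_ge[OF S0 u_perron p2])
      then have i2: "(1 - t) * max (Vn n x - t * D) 0 \<le> U x" using Ueq by simp
      have Vnnn: "0 \<le> Vn n x" using Unsub[of n] unfolding subsol_def by blast
      have "Vn n x \<le> ls n x * D" by (rule subsol_le[OF Unsub lam_nonneg]) (use ls_nonneg Dbd in auto)
      also have "\<dots> \<le> (M + 1) * D"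
      proof (rule mult_right_mono)
        show "ls n x \<le> M + 1" using M(1)[rule_format, of x] c2[rule_format, of x] t2 by linarith
      qed (use Dpos in simp)
      finally have VnM: "Vn n x \<le> (M + 1) * D" .
      have "Vn n x - U x \<le> t * D + t * Vn n x" using perturb_err[OF Vnnn t Dpos] i2 by simp
      also have "\<dots> \<le> t * D + t * ((M + 1) * D)" using VnM t by (intro add_left_mono mult_left_mono) auto
      also have "\<dots> = t * (D * (M + 2))" by (simp add: algebra_simps)
      finally have B: "Vn n x - U x \<le> e / 2" using tDM by simp
      have "\<bar>Vn n x - U x\<bar> < e" using A B e by (simp add: abs_le_iff)
      then show "\<bar>us n x - u x\<bar> < ereal e" using Ueq Vneq by simp
    qed
  qed
qed

end
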